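(* Let $P:\mathcal{C}^{op}\to\mathsf{InfSl}$ be an elementary and existential doctrine. Then the maps of the cartesian bicategory $\mathsf{Rel}(P)$ are precisely the elements $\phi\in P(X\times Y)$ that are both functional and entire from $X$ to $Y$.
   Context: An elementary and existential doctrine is a functor $P:\mathcal{C}^{op}\to\mathsf{InfSl}$ from a category with finite products to inf-semilattices such that for each $Y$ there is an equality predicate $\delta_Y\in P(Y\times Y)$ with $\alpha\mapsto P_{\langle\pi_1,\pi_2\rangle}(\alpha)\wedge P_{\langle\pi_2,\pi_3\rangle}(\delta_Y)$ left adjoint to $P_{\mathrm{id}_X\times\Delta_Y}:P(X\times Y\times Y)\to P(X\times Y)$, and for each projection $\pi_X:X\times Y\to X$, $P_{\pi_X}$ has a left adjoint $\exists_{\pi_X}$ satisfying Beck–Chevalley and Frobenius reciprocity. $\mathsf{Rel}(P)$ is the cartesian bicategory whose objects are those of $\mathcal{C}$, with $\mathsf{Rel}(P)[X,Y]=P(X\times Y)$ (ordered as in $P$), identities $\delta_X$, composition of $\phi:X\to Y$, $\psi:Y\to Z$ given by $\exists_{\pi_{X\times Z}}(P_{\pi_{X\times Y}}(\phi)\wedge P_{\pi_{Y\times Z}}(\psi))$ (projections out of $X\times Y\times Z$), monoidal product on objects the product of $\mathcal{C}$ and on arrows $\phi\otimes\psi=P_{\langle\pi_X,\pi_Y\rangle}(\phi)\wedge P_{\langle\pi_U,\pi_V\rangle}(\psi)$, and comonoids $\mathrm{copy}_X=\Gamma_P(\Delta_X)$, $\mathrm{disc}_X=\Gamma_P(!_X)$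 and monoids $\mathrm{cocopy}_X=P_{\mathrm{id}_{X\times X}\times\Delta_X}(\delta_{X\times X})$, $\mathrm{codisc}_X=P_{\mathrm{id}_1\times !_X}(\delta_1)$, where $\Gamma_P(f)=P_{f\times\mathrm{id}_Y}(\delta_Y)$ for $f:X\to Y$. In a cartesian bicategory (composition in diagrammatic order) an arrow $f:X\to Y$ is a map if $f;\mathrm{copy}_Y\ge\mathrm{copy}_X;(f\otimes f)$ and $f;\mathrm{disc}_Y\ge\mathrm{disc}_X$. An element $\alpha\in P(X\times Y)$ is functional from $X$ to $Y$ if $P_{\langle\pi_1,\pi_2\rangle}(\alpha)\wedge P_{\langle\pi_1,\pi_3\rangle}(\alpha)\le P_{\langle\pi_2,\pi_3\rangle}(\delta_Y)$ in $P(X\times Y\times Y)$, and entire from $X$ to $Y$ if $\top_X\le\exists_{\pi_X}(\alpha)$ in $P(X)$. *)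

theory Defs
  imports Main
begin

text \<open>Objects have type 'o, arrows have type 'a (every element of 'a is an arrow).
  cmp g f is the usual composite g after f, defined when cod f = dom g.\<close>

record ('o,'a) fpcat =
  cdom :: "'a \<Rightarrow> 'o"
  ccod :: "'a \<Rightarrow> 'o"
  cmp  :: "'a \<Rightarrow> 'a \<Rightarrow> 'a"
  idt  :: "'o \<Rightarrow> 'a"
  one  :: "'o"
  bang :: "'o \<Rightarrow> 'a"
  prd  :: "'o \<Rightarrow> 'o \<Rightarrow> 'o"
  pr1  :: "'o \<Rightarrow> 'o \<Rightarrow> 'a"
  pr2  :: "'o \<Rightarrow> 'o \<Rightarrow> 'a"
  tup  :: "'a \<Rightarrow> 'a \<Rightarrow> 'a"

definition hom :: "('o,'a) fpcat \<Rightarrow> 'a \<Rightarrow> 'o \<Rightarrow> 'o \<Rightarrow> bool" where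
  "hom C f X Y \<longleftrightarrow> cdom C f = X \<and> ccod C f = Y"

definition is_fp_category :: "('o,'a) fpcat \<Rightarrow> bool" where
  "is_fp_category C \<longleftrightarrow>
     (\<forall>X. hom C (idt C X) X X)
   \<and> (\<forall>f g. ccod C f = cdom C g \<longrightarrow> hom C (cmp C g f) (cdom C f) (ccod C g))
   \<and> (\<forall>f. cmp C f (idt C (cdom C f)) = f \<and> cmp C (idt C (ccod C f)) f = f)
   \<and> (\<forall>f g h. ccod C f = cdom C g \<longrightarrow> ccod C g = cdom C h \<longrightarrow>
          cmp C h (cmp C g f) = cmp C (cmp C h g) f)
   \<and> (\<forall>X. hom C (bang C X) X (one C))
   \<and> (\<forall>X f. hom C f X (one C) \<longrightarrow> f = bang C X)
   \<and> (\<forall>X Y. hom C (pr1 C X Y) (prd C X Y) X \<and> hom C (pr2 C X Y) (prd C X Y) Y)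
   \<and> (\<forall>Z X Y f g. hom C f Z X \<longrightarrow> hom C g Z Y \<longrightarrow>
          hom C (tup C f g) Z (prd C X Y)
        \<and> cmp C (pr1 C X Y) (tup C f g) = f
        \<and> cmp C (pr2 C X Y) (tup C f g) = g)
   \<and> (\<forall>Z X Y h. hom C h Z (prd C X Y) \<longrightarrow>
          h = tup C (cmp C (pr1 C X Y) h) (cmp C (pr2 C X Y) h))"

definition cross :: "('o,'a) fpcat \<Rightarrow> 'a \<Rightarrow> 'a \<Rightarrow> 'a" where
  "cross C f g = tup C (cmp C f (pr1 C (cdom C f) (cdom C g)))
                       (cmp C g (pr2 C (cdom C f) (cdom C g)))"

definition diag :: "('o,'a) fpcat \<Rightarrow> 'o \<Rightarrow> 'a" where
  "diag C X = tup C (idt C X) (idt C X)"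

definition tpr1 :: "('o,'a) fpcat \<Rightarrow> 'o \<Rightarrow> 'o \<Rightarrow> 'o \<Rightarrow> 'a" where
  "tpr1 C X Y Z = pr1 C X (prd C Y Z)"
definition tpr2 :: "('o,'a) fpcat \<Rightarrow> 'o \<Rightarrow> 'o \<Rightarrow> 'o \<Rightarrow> 'a" where
  "tpr2 C X Y Z = cmp C (pr1 C Y Z) (pr2 C X (prd C Y Z))"
definition tpr3 :: "('o,'a) fpcat \<Rightarrow> 'o \<Rightarrow> 'o \<Rightarrow> 'o \<Rightarrow> 'a" where
  "tpr3 C X Y Z = cmp C (pr2 C Y Z) (pr2 C X (prd C Y Z))"

text \<open>A functor P : C^op \<rightarrow> InfSl: fibre carriers car X, with order leq X,
  binary meet mt X and top tp X; reindexing rx f = P_f.  eq Y is \<delta>_Y and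
  ex X Y is \<exists> along the projection pr1 X Y : X\<times>Y \<rightarrow> X.\<close>

record ('o,'a,'p) doctrine =
  car :: "'o \<Rightarrow> 'p set"
  leq :: "'o \<Rightarrow> 'p \<Rightarrow> 'p \<Rightarrow> bool"
  mt  :: "'o \<Rightarrow> 'p \<Rightarrow> 'p \<Rightarrow> 'p"
  tp  :: "'o \<Rightarrow> 'p"
  rx  :: "'a \<Rightarrow> 'p \<Rightarrow> 'p"
  eqp :: "'o \<Rightarrow> 'p"
  ex  :: "'o \<Rightarrow> 'o \<Rightarrow> 'p \<Rightarrow> 'p"

definition is_infsl :: "'p set \<Rightarrow> ('p \<Rightarrow> 'p \<Rightarrow> bool) \<Rightarrow> ('p \<Rightarrow> 'p \<Rightarrow> 'p) \<Rightarrow> 'p \<Rightarrow> bool" where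
  "is_infsl A le m t \<longleftrightarrow>
     (\<forall>a\<in>A. le a a)
   \<and> (\<forall>a\<in>A. \<forall>b\<in>A. le a b \<longrightarrow> le b a \<longrightarrow> a = b)
   \<and> (\<forall>a\<in>A. \<forall>b\<in>A. \<forall>c\<in>A. le a b \<longrightarrow> le b c \<longrightarrow> le a c)
   \<and> t \<in> A \<and> (\<forall>a\<in>A. le a t)
   \<and> (\<forall>a\<in>A. \<forall>b\<in>A. m a b \<in> A \<and> le (m a b) a \<and> le (m a b) b
          \<and> (\<forall>c\<in>A. le c a \<longrightarrow> le c b \<longrightarrow> le c (m a b)))"

definition is_infsl_doctrine :: "('o,'a) fpcat \<Rightarrow> ('o,'a,'p) doctrine \<Rightarrow> bool" where
  "is_infsl_doctrine C P \<longleftrightarrow>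
     (\<forall>X. is_infsl (car P X) (leq P X) (mt P X) (tp P X))
   \<and> (\<forall>f A B. hom C f A B \<longrightarrow>
          (\<forall>\<alpha>\<in>car P B. rx P f \<alpha> \<in> car P A)
        \<and> (\<forall>\<alpha>\<in>car P B. \<forall>\<beta>\<in>car P B. rx P f (mt P B \<alpha> \<beta>) = mt P A (rx P f \<alpha>) (rx P f \<beta>))
        \<and> rx P f (tp P B) = tp P A)
   \<and> (\<forall>X. \<forall>\<alpha>\<in>car P X. rx P (idt C X) \<alpha> = \<alpha>)
   \<and> (\<forall>f g. ccod C f = cdom C g \<longrightarrow>
          (\<forall>\<alpha>\<in>car P (ccod C g). rx P (cmp C g f) \<alpha> = rx P f (rx P g \<alpha>)))"

definition is_elementary :: "('o,'a) fpcat \<Rightarrow> ('o,'a,'p) doctrine \<Rightarrow> bool" where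
  "is_elementary C P \<longleftrightarrow>
     (\<forall>Y. eqp P Y \<in> car P (prd C Y Y)
        \<and> (\<forall>X. \<forall>\<alpha>\<in>car P (prd C X Y). \<forall>\<beta>\<in>car P (prd C X (prd C Y Y)).
             leq P (prd C X (prd C Y Y))
               (mt P (prd C X (prd C Y Y))
                  (rx P (tup C (tpr1 C X Y Y) (tpr2 C X Y Y)) \<alpha>)
                  (rx P (tup C (tpr2 C X Y Y) (tpr3 C X Y Y)) (eqp P Y)))
               \<beta>
             \<longleftrightarrow> leq P (prd C X Y) \<alpha> (rx P (cross C (idt C X) (diag C Y)) \<beta>)))"

definition is_existential :: "('o,'a) fpcat \<Rightarrow> ('o,'a,'p) doctrine \<Rightarrow> bool" where
  "is_existential C P \<longleftrightarrow>
     (\<forall>X Y. \<forall>\<alpha>\<in>car P (prd C X Y). ex P X Y \<alpha> \<in> car P X)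
   \<and> (\<forall>X Y. \<forall>\<alpha>\<in>car P (prd C X Y). \<forall>\<beta>\<in>car P X.
          leq P X (ex P X Y \<alpha>) \<beta> \<longleftrightarrow> leq P (prd C X Y) \<alpha> (rx P (pr1 C X Y) \<beta>))
   \<comment> \<open>Beck--Chevalley for the pullback of pr1 X Y along f : X' \<rightarrow> X\<close>
   \<and> (\<forall>f X' X Y. hom C f X' X \<longrightarrow> (\<forall>\<alpha>\<in>car P (prd C X Y).
          rx P f (ex P X Y \<alpha>) = ex P X' Y (rx P (cross C f (idt C Y)) \<alpha>)))
   \<comment> \<open>Frobenius reciprocity\<close>
   \<and> (\<forall>X Y. \<forall>\<alpha>\<in>car P (prd C X Y). \<forall>\<beta>\<in>car P X.
          ex P X Y (mt P (prd C X Y) (rx P (pr1 C X Y) \<beta>) \<alpha>) = mt P X \<beta> (ex P X Y \<alpha>))"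

definition is_elem_exist_doctrine :: "('o,'a) fpcat \<Rightarrow> ('o,'a,'p) doctrine \<Rightarrow> bool" where
  "is_elem_exist_doctrine C P \<longleftrightarrow> is_fp_category C \<and> is_infsl_doctrine C P
     \<and> is_elementary C P \<and> is_existential C P"

text \<open>The
  ternary product is taken as (X\<times>Z)\<times>Y so that \<pi>_{X\<times>Z} is the projection pr1.\<close>

definition rcomp :: "('o,'a) fpcat \<Rightarrow> ('o,'a,'p) doctrine \<Rightarrow> 'o \<Rightarrow> 'o \<Rightarrow> 'o \<Rightarrow> 'p \<Rightarrow> 'p \<Rightarrow> 'p" where
  "rcomp C P X Y Z \<phi> \<psi> =
    (let W = prd C (prd C X Z) Y;
         pXZ = pr1 C (prd C X Z) Y;
         pY = pr2 C (prd C X Z) Y;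
         pX = cmp C (pr1 C X Z) pXZ;
         pZ = cmp C (pr2 C X Z) pXZ
     in ex P (prd C X Z) Y
          (mt P W (rx P (tup C pX pY) \<phi>) (rx P (tup C pY pZ) \<psi>)))"

definition rtensor :: "('o,'a) fpcat \<Rightarrow> ('o,'a,'p) doctrine \<Rightarrow> 'o \<Rightarrow> 'o \<Rightarrow> 'o \<Rightarrow> 'o \<Rightarrow> 'p \<Rightarrow> 'p \<Rightarrow> 'p" where
  "rtensor C P X Y U V \<phi> \<psi> =
    (let S = prd C X U; T = prd C Y V;
         pX = cmp C (pr1 C X U) (pr1 C S T);
         pU = cmp C (pr2 C X U) (pr1 C S T);
         pY = cmp C (pr1 C Y V) (pr2 C S T);
         pV = cmp C (pr2 C Y V) (pr2 C S T)
     in mt P (prd C S T) (rx P (tup C pX pY) \<phi>) (rx P (tup C pU pV) \<psi>))"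

definition graph :: "('o,'a) fpcat \<Rightarrow> ('o,'a,'p) doctrine \<Rightarrow> 'a \<Rightarrow> 'p" where
  "graph C P f = rx P (cross C f (idt C (ccod C f))) (eqp P (ccod C f))"

definition rcopy :: "('o,'a) fpcat \<Rightarrow> ('o,'a,'p) doctrine \<Rightarrow> 'o \<Rightarrow> 'p" where
  "rcopy C P X = graph C P (diag C X)"

definition rdisc :: "('o,'a) fpcat \<Rightarrow> ('o,'a,'p) doctrine \<Rightarrow> 'o \<Rightarrow> 'p" where
  "rdisc C P X = graph C P (bang C X)"

definition is_map :: "('o,'a) fpcat \<Rightarrow> ('o,'a,'p) doctrine \<Rightarrow> 'o \<Rightarrow> 'o \<Rightarrow> 'p \<Rightarrow> bool" where
  "is_map C P X Y f \<longleftrightarrow>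
     leq P (prd C X (prd C Y Y))
        (rcomp C P X (prd C X X) (prd C Y Y) (rcopy C P X) (rtensor C P X Y X Y f f))
        (rcomp C P X Y (prd C Y Y) f (rcopy C P Y))
   \<and> leq P (prd C X (one C))
        (rdisc C P X)
        (rcomp C P X Y (one C) f (rdisc C P Y))"

definition functional :: "('o,'a) fpcat \<Rightarrow> ('o,'a,'p) doctrine \<Rightarrow> 'o \<Rightarrow> 'o \<Rightarrow> 'p \<Rightarrow> bool" where
  "functional C P X Y \<alpha> \<longleftrightarrow>
     leq P (prd C X (prd C Y Y))
       (mt P (prd C X (prd C Y Y))
          (rx P (tup C (tpr1 C X Y Y) (tpr2 C X Y Y)) \<alpha>)
          (rx P (tup C (tpr1 C X Y Y) (tpr3 C X Y Y)) \<alpha>))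
       (rx P (tup C (tpr2 C X Y Y) (tpr3 C X Y Y)) (eqp P Y))"

definition entire :: "('o,'a) fpcat \<Rightarrow> ('o,'a,'p) doctrine \<Rightarrow> 'o \<Rightarrow> 'o \<Rightarrow> 'p \<Rightarrow> bool" where
  "entire C P X Y \<alpha> \<longleftrightarrow> leq P X (tp P X) (ex P X Y \<alpha>)"

end

theory Submission imports Defs begin

locale ED =
  fixes C :: "('o,'a) fpcat" and P :: "('o,'a,'p) doctrine"
  assumes ax: "is_elem_exist_doctrine C P"
begin

lemma fp: "is_fp_category C" using ax unfolding is_elem_exist_doctrine_def by simp
lemma isd: "is_infsl_doctrine C P" using ax unfolding is_elem_exist_doctrine_def by simp
lemma iel: "is_elementary C P" using ax unfolding is_elem_exist_doctrine_def by simp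
lemma iex: "is_existential C P" using ax unfolding is_elem_exist_doctrine_def by simp

lemma dom_idt[simp]: "cdom C (idt C X) = X" and cod_idt[simp]: "ccod C (idt C X) = X"
  using fp unfolding is_fp_category_def hom_def by auto

lemma dom_cmp[simp]: "ccod C f = cdom C g \<Longrightarrow> cdom C (cmp C g f) = cdom C f"
  and cod_cmp[simp]: "ccod C f = cdom C g \<Longrightarrow> ccod C (cmp C g f) = ccod C g"
  using fp unfolding is_fp_category_def hom_def by auto

lemma dom_pr1[simp]: "cdom C (pr1 C X Y) = prd C X Y" and cod_pr1[simp]: "ccod C (pr1 C X Y) = X"
  and dom_pr2[simp]: "cdom C (pr2 C X Y) = prd C X Y" and cod_pr2[simp]: "ccod C (pr2 C X Y) = Y"
  and dom_bang[simp]: "cdom C (bang C X) = X" and cod_bang[simp]: "ccod C (bang C X) = one C"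
  using fp unfolding is_fp_category_def hom_def by auto

lemma bang_uniq: "cdom C f = X \<Longrightarrow> ccod C f = one C \<Longrightarrow> f = bang C X"
  using fp unfolding is_fp_category_def hom_def by auto

lemma tup_props: "cdom C f = cdom C g \<Longrightarrow>
   cdom C (tup C f g) = cdom C f \<and> ccod C (tup C f g) = prd C (ccod C f) (ccod C g)
   \<and> cmp C (pr1 C (ccod C f) (ccod C g)) (tup C f g) = f
   \<and> cmp C (pr2 C (ccod C f) (ccod C g)) (tup C f g) = g"
  using fp unfolding is_fp_category_def hom_def
  by (metis (no_types, lifting))

lemma dom_tup[simp]: "cdom C f = cdom C g \<Longrightarrow> cdom C (tup C f g) = cdom C f"
  and cod_tup[simp]: "cdom C f = cdom C g \<Longrightarrow> ccod C (tup C f g) = prd C (ccod C f) (ccod C g)"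
  using tup_props by auto

lemma pr1_tup[simp]: "cdom C f = cdom C g \<Longrightarrow> ccod C f = X \<Longrightarrow> ccod C g = Y \<Longrightarrow>
    cmp C (pr1 C X Y) (tup C f g) = f"
  and pr2_tup[simp]: "cdom C f = cdom C g \<Longrightarrow> ccod C f = X \<Longrightarrow> ccod C g = Y \<Longrightarrow>
    cmp C (pr2 C X Y) (tup C f g) = g"
  using tup_props by auto

lemma tup_eta: "cdom C h = Z \<Longrightarrow> ccod C h = prd C X Y \<Longrightarrow>
   h = tup C (cmp C (pr1 C X Y) h) (cmp C (pr2 C X Y) h)"
  using fp unfolding is_fp_category_def hom_def by auto

lemma cmp_assoc[simp]: "ccod C f = cdom C g \<Longrightarrow> ccod C g = cdom C h \<Longrightarrow>
          cmp C (cmp C h g) f = cmp C h (cmp C g f)"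
  using fp unfolding is_fp_category_def hom_def by auto

lemma cmp_idl[simp]: "ccod C f = X \<Longrightarrow> cmp C (idt C X) f = f"
  and cmp_idr[simp]: "cdom C f = X \<Longrightarrow> cmp C f (idt C X) = f"
  using fp unfolding is_fp_category_def hom_def by auto

lemma tup_cmp[simp]: "cdom C f = cdom C g \<Longrightarrow> ccod C h = cdom C f \<Longrightarrow>
    cmp C (tup C f g) h = tup C (cmp C f h) (cmp C g h)"
proof -
  assume a: "cdom C f = cdom C g" "ccod C h = cdom C f"
  let ?k = "cmp C (tup C f g) h"
  have "?k = tup C (cmp C (pr1 C (ccod C f) (ccod C g)) ?k) (cmp C (pr2 C (ccod C f) (ccod C g)) ?k)"
    by (rule tup_eta[where Z="cdom C h"]) (use a in simp_all)
  also have "\<dots> = tup C (cmp C f h) (cmp C g h)"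
    using a by (simp del: cmp_assoc add: cmp_assoc[symmetric])
  finally show ?thesis .
qed

lemma tup_eta'[simp]: "ccod C h = prd C X Y \<Longrightarrow> tup C (cmp C (pr1 C X Y) h) (cmp C (pr2 C X Y) h) = h"
  using tup_eta by metis

lemma tup_pr[simp]: "tup C (pr1 C X Y) (pr2 C X Y) = idt C (prd C X Y)"
  using tup_eta[of "idt C (prd C X Y)" "prd C X Y" X Y] by simp


lemma infsl: "is_infsl (car P X) (leq P X) (mt P X) (tp P X)"
  using isd unfolding is_infsl_doctrine_def by simp

lemma leq_refl: "a \<in> car P X \<Longrightarrow> leq P X a a"
  and leq_antisym: "a \<in> car P X \<Longrightarrow> b \<in> car P X \<Longrightarrow> leq P X a b \<Longrightarrow> leq P X b a \<Longrightarrow> a = b"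
  and leq_trans: "a \<in> car P X \<Longrightarrow> b \<in> car P X \<Longrightarrow> c \<in> car P X \<Longrightarrow> leq P X a b \<Longrightarrow> leq P X b c \<Longrightarrow> leq P X a c"
  and tp_car[simp]: "tp P X \<in> car P X"
  and leq_tp: "a \<in> car P X \<Longrightarrow> leq P X a (tp P X)"
  and mt_car[simp]: "a \<in> car P X \<Longrightarrow> b \<in> car P X \<Longrightarrow> mt P X a b \<in> car P X"
  and mt_le1: "a \<in> car P X \<Longrightarrow> b \<in> car P X \<Longrightarrow> leq P X (mt P X a b) a"
  and mt_le2: "a \<in> car P X \<Longrightarrow> b \<in> car P X \<Longrightarrow> leq P X (mt P X a b) b"
  and mt_glb: "a \<in> car P X \<Longrightarrow> b \<in> car P X \<Longrightarrow> c \<in> car P X \<Longrightarrow> leq P X c a \<Longrightarrow> leq P X c b \<Longrightarrow> leq P X c (mt P X a b)"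
  using infsl[of X] unfolding is_infsl_def by blast+

lemma rx_car[simp]: "cdom C f = A \<Longrightarrow> \<alpha> \<in> car P (ccod C f) \<Longrightarrow> rx P f \<alpha> \<in> car P A"
  using isd unfolding is_infsl_doctrine_def hom_def by blast

lemma rx_mt[simp]: "ccod C f = B \<Longrightarrow> \<alpha> \<in> car P B \<Longrightarrow> \<beta> \<in> car P B \<Longrightarrow>
   rx P f (mt P B \<alpha> \<beta>) = mt P (cdom C f) (rx P f \<alpha>) (rx P f \<beta>)"
  using isd unfolding is_infsl_doctrine_def hom_def by blast

lemma rx_tp[simp]: "ccod C f = B \<Longrightarrow> rx P f (tp P B) = tp P (cdom C f)"
  using isd unfolding is_infsl_doctrine_def hom_def by blast

lemma rx_id[simp]: "\<alpha> \<in> car P X \<Longrightarrow> rx P (idt C X) \<alpha> = \<alpha>"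
  using isd unfolding is_infsl_doctrine_def by blast

lemma rx_rx[simp]: "ccod C f = cdom C g \<Longrightarrow> \<alpha> \<in> car P (ccod C g) \<Longrightarrow>
    rx P f (rx P g \<alpha>) = rx P (cmp C g f) \<alpha>"
  using isd unfolding is_infsl_doctrine_def by metis

lemma rx_mono: "cdom C f = A \<Longrightarrow> ccod C f = B \<Longrightarrow> \<alpha> \<in> car P B \<Longrightarrow> \<beta> \<in> car P B \<Longrightarrow>
   leq P B \<alpha> \<beta> \<Longrightarrow> leq P A (rx P f \<alpha>) (rx P f \<beta>)"
proof -
  assume a: "cdom C f = A" "ccod C f = B" "\<alpha> \<in> car P B" "\<beta> \<in> car P B" "leq P B \<alpha> \<beta>"
  have "\<alpha> = mt P B \<alpha> \<beta>"
  proof (rule leq_antisym[of _ B])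
    show "leq P B \<alpha> (mt P B \<alpha> \<beta>)" using a by (intro mt_glb leq_refl) auto
    show "leq P B (mt P B \<alpha> \<beta>) \<alpha>" using a by (intro mt_le1) auto
  qed (use a in auto)
  hence "rx P f \<alpha> = mt P A (rx P f \<alpha>) (rx P f \<beta>)" using a by (metis rx_mt)
  thus ?thesis using a by (metis mt_le2 rx_car)
qed

lemma eqp_car[simp]: "eqp P Y \<in> car P (prd C Y Y)"
  using iel unfolding is_elementary_def by blast

lemma elem: "\<alpha> \<in> car P (prd C X Y) \<Longrightarrow> \<beta> \<in> car P (prd C X (prd C Y Y)) \<Longrightarrow>
             leq P (prd C X (prd C Y Y))
               (mt P (prd C X (prd C Y Y))
                  (rx P (tup C (tpr1 C X Y Y) (tpr2 C X Y Y)) \<alpha>)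
                  (rx P (tup C (tpr2 C X Y Y) (tpr3 C X Y Y)) (eqp P Y)))
               \<beta>
             \<longleftrightarrow> leq P (prd C X Y) \<alpha> (rx P (cross C (idt C X) (diag C Y)) \<beta>)"
  using iel unfolding is_elementary_def by blast

lemma ex_car[simp]: "\<alpha> \<in> car P (prd C X Y) \<Longrightarrow> ex P X Y \<alpha> \<in> car P X"
  using iex unfolding is_existential_def by blast

lemma ex_adj: "\<alpha> \<in> car P (prd C X Y) \<Longrightarrow> \<beta> \<in> car P X \<Longrightarrow>
          leq P X (ex P X Y \<alpha>) \<beta> \<longleftrightarrow> leq P (prd C X Y) \<alpha> (rx P (pr1 C X Y) \<beta>)"
  using iex unfolding is_existential_def by blast

lemma ex_BC: "cdom C f = X' \<Longrightarrow> ccod C f = X \<Longrightarrow> \<alpha> \<in> car P (prd C X Y) \<Longrightarrow>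
          rx P f (ex P X Y \<alpha>) = ex P X' Y (rx P (cross C f (idt C Y)) \<alpha>)"
  using iex unfolding is_existential_def hom_def by blast

lemmas tpr_defs = tpr1_def tpr2_def tpr3_def cross_def diag_def

lemma Refl: "ccod C s = Y \<Longrightarrow> rx P (tup C s s) (eqp P Y) = tp P (cdom C s)"
proof -
  assume s: "ccod C s = Y"
  define W where "W = cdom C s"
  have "leq P (prd C W Y) (tp P (prd C W Y)) (rx P (cross C (idt C W) (diag C Y))
          (rx P (tup C (tpr2 C W Y Y) (tpr3 C W Y Y)) (eqp P Y)))"
    by (subst elem[symmetric]) (auto simp: tpr_defs intro!: mt_le2)
  hence "leq P (prd C W Y) (tp P (prd C W Y)) (rx P (tup C (pr2 C W Y) (pr2 C W Y)) (eqp P Y))"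
    by (simp add: tpr_defs)
  hence "leq P W (rx P (tup C (idt C W) s) (tp P (prd C W Y)))
          (rx P (tup C (idt C W) s) (rx P (tup C (pr2 C W Y) (pr2 C W Y)) (eqp P Y)))"
    using s W_def by (intro rx_mono) auto
  hence "leq P W (tp P W) (rx P (tup C s s) (eqp P Y))"
    using s W_def by simp
  moreover have "rx P (tup C s s) (eqp P Y) \<in> car P W" using s W_def by simp
  ultimately show ?thesis using W_def by (metis leq_antisym leq_tp tp_car)
qed

lemma Leib: "\<gamma> \<in> car P (prd C W Y) \<Longrightarrow> cdom C s = W \<Longrightarrow> ccod C s = Y \<Longrightarrow>
   cdom C t = W \<Longrightarrow> ccod C t = Y \<Longrightarrow>
   leq P W (mt P W (rx P (tup C (idt C W) s) \<gamma>) (rx P (tup C s t) (eqp P Y)))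
     (rx P (tup C (idt C W) t) \<gamma>)"
proof -
  assume a: "\<gamma> \<in> car P (prd C W Y)" "cdom C s = W" "ccod C s = Y" "cdom C t = W" "ccod C t = Y"
  have "leq P (prd C W (prd C Y Y))
               (mt P (prd C W (prd C Y Y))
                  (rx P (tup C (tpr1 C W Y Y) (tpr2 C W Y Y)) \<gamma>)
                  (rx P (tup C (tpr2 C W Y Y) (tpr3 C W Y Y)) (eqp P Y)))
               (rx P (tup C (tpr1 C W Y Y) (tpr3 C W Y Y)) \<gamma>)"
    using a by (subst elem) (auto simp: tpr_defs intro: leq_refl)
  hence "leq P W (rx P (tup C (idt C W) (tup C s t)) (mt P (prd C W (prd C Y Y))
                  (rx P (tup C (tpr1 C W Y Y) (tpr2 C W Y Y)) \<gamma>)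
                  (rx P (tup C (tpr2 C W Y Y) (tpr3 C W Y Y)) (eqp P Y))))
         (rx P (tup C (idt C W) (tup C s t)) (rx P (tup C (tpr1 C W Y Y) (tpr3 C W Y Y)) \<gamma>))"
    using a by (intro rx_mono) (auto simp: tpr_defs)
  thus ?thesis using a by (simp add: tpr_defs)
qed


lemma mt_tp1[simp]: "a \<in> car P X \<Longrightarrow> mt P X (tp P X) a = a"
  by (rule leq_antisym[of _ X]) (auto intro: mt_le2 mt_glb leq_tp leq_refl)
lemma mt_tp2[simp]: "a \<in> car P X \<Longrightarrow> mt P X a (tp P X) = a"
  by (rule leq_antisym[of _ X]) (auto intro: mt_le1 mt_glb leq_tp leq_refl)

lemma mt_mono2: "a \<in> car P X \<Longrightarrow> b \<in> car P X \<Longrightarrow> c \<in> car P X \<Longrightarrow> leq P X b c \<Longrightarrow>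
   leq P X (mt P X a b) (mt P X a c)"
  by (rule mt_glb) (auto intro: mt_le1 mt_le2 leq_trans)

declare Refl[simp]

lemma mt_le2_trans: "leq P X b c \<Longrightarrow> a \<in> car P X \<Longrightarrow> b \<in> car P X \<Longrightarrow> c \<in> car P X \<Longrightarrow>
   leq P X (mt P X a b) c"
  by (rule leq_trans[OF _ _ _ mt_le2]) auto
lemma mt_le1_trans: "leq P X a c \<Longrightarrow> a \<in> car P X \<Longrightarrow> b \<in> car P X \<Longrightarrow> c \<in> car P X \<Longrightarrow>
   leq P X (mt P X a b) c"
  by (rule leq_trans[OF _ _ _ mt_le1]) auto

lemma Sym: "cdom C s = W \<Longrightarrow> ccod C s = Y \<Longrightarrow> cdom C t = W \<Longrightarrow> ccod C t = Y \<Longrightarrow>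
   leq P W (rx P (tup C s t) (eqp P Y)) (rx P (tup C t s) (eqp P Y))"
  using Leib[of "rx P (tup C (pr2 C W Y) (cmp C s (pr1 C W Y))) (eqp P Y)" W Y s t]
  by simp

lemma Leib': "\<gamma> \<in> car P (prd C W Y) \<Longrightarrow> cdom C s = W \<Longrightarrow> ccod C s = Y \<Longrightarrow>
   cdom C t = W \<Longrightarrow> ccod C t = Y \<Longrightarrow>
   leq P W (mt P W (rx P (tup C (idt C W) t) \<gamma>) (rx P (tup C s t) (eqp P Y)))
     (rx P (tup C (idt C W) s) \<gamma>)"
  apply (rule leq_trans[OF _ _ _ mt_mono2 Leib[of \<gamma> W Y t s]])
  by (auto intro: Sym)

lemma ex_intro: "\<alpha> \<in> car P (prd C X Y) \<Longrightarrow> cdom C s = X \<Longrightarrow> ccod C s = Y \<Longrightarrow>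
   leq P X (rx P (tup C (idt C X) s) \<alpha>) (ex P X Y \<alpha>)"
proof -
  assume a: "\<alpha> \<in> car P (prd C X Y)" "cdom C s = X" "ccod C s = Y"
  have "leq P (prd C X Y) \<alpha> (rx P (pr1 C X Y) (ex P X Y \<alpha>))"
    using a by (subst ex_adj[symmetric]) (auto intro: leq_refl)
  hence "leq P X (rx P (tup C (idt C X) s) \<alpha>) (rx P (tup C (idt C X) s) (rx P (pr1 C X Y) (ex P X Y \<alpha>)))"
    using a by (intro rx_mono) auto
  thus ?thesis using a by simp
qed

lemma ex_elim: "\<alpha> \<in> car P (prd C X Y) \<Longrightarrow> \<beta> \<in> car P X \<Longrightarrow>
   leq P (prd C X Y) \<alpha> (rx P (pr1 C X Y) \<beta>) \<Longrightarrow> leq P X (ex P X Y \<alpha>) \<beta>"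
  using ex_adj by blast

lemma rcomp_unf: "rcomp C P X Y Z \<phi> \<psi> =
     ex P (prd C X Z) Y
          (mt P (prd C (prd C X Z) Y) (rx P (tup C (cmp C (pr1 C X Z) (pr1 C (prd C X Z) Y)) (pr2 C (prd C X Z) Y)) \<phi>)
              (rx P (tup C (pr2 C (prd C X Z) Y) (cmp C (pr2 C X Z) (pr1 C (prd C X Z) Y))) \<psi>))"
  unfolding rcomp_def Let_def ..

lemma A_le:
  assumes ph: "\<phi> \<in> car P (prd C X Y)"
  shows "leq P (prd C X (prd C Y Y)) (rcomp C P X Y (prd C Y Y) \<phi> (rcopy C P Y))
     (rx P (tup C (tpr2 C X Y Y) (tpr3 C X Y Y)) (eqp P Y))"
proof -
  let ?W = "prd C X (prd C Y Y)"
  let ?V = "prd C ?W Y"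
  let ?pY = "pr2 C ?W Y"
  let ?pZ = "cmp C (pr2 C X (prd C Y Y)) (pr1 C ?W Y)"
  have L: "leq P ?V (mt P ?V (tp P ?V) (rx P (tup C (tup C ?pY ?pY) ?pZ) (eqp P (prd C Y Y))))
     (rx P (tup C (cmp C (pr1 C Y Y) ?pZ) (cmp C (pr2 C Y Y) ?pZ)) (eqp P Y))"
    using Leib[of "rx P (tup C (cmp C (pr1 C Y Y) (pr2 C ?V (prd C Y Y))) (cmp C (pr2 C Y Y) (pr2 C ?V (prd C Y Y)))) (eqp P Y)"
       ?V "prd C Y Y" "tup C ?pY ?pY" ?pZ]
    by simp
  show ?thesis
    unfolding rcomp_unf
    apply (rule ex_elim)
    using ph L
      apply (simp_all add: tpr_defs rcopy_def graph_def)
    by (erule mt_le2_trans) simp_all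
qed


lemma rcomp_intro:
  assumes "\<phi> \<in> car P (prd C X Y)" "\<psi> \<in> car P (prd C Y Z)" "\<gamma> \<in> car P (prd C X Z)"
    "cdom C s = prd C X Z" "ccod C s = Y"
    "leq P (prd C X Z) \<gamma> (rx P (tup C (idt C (prd C X Z)) s)
          (mt P (prd C (prd C X Z) Y) (rx P (tup C (cmp C (pr1 C X Z) (pr1 C (prd C X Z) Y)) (pr2 C (prd C X Z) Y)) \<phi>)
              (rx P (tup C (pr2 C (prd C X Z) Y) (cmp C (pr2 C X Z) (pr1 C (prd C X Z) Y))) \<psi>)))"
  shows "leq P (prd C X Z) \<gamma> (rcomp C P X Y Z \<phi> \<psi>)"
  unfolding rcomp_unf
  by (rule leq_trans[OF _ _ _ assms(6) ex_intro]) (use assms in simp_all)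

lemma rcomp_elim:
  assumes "\<phi> \<in> car P (prd C X Y)" "\<psi> \<in> car P (prd C Y Z)" "\<beta> \<in> car P (prd C X Z)"
    "leq P (prd C (prd C X Z) Y)
          (mt P (prd C (prd C X Z) Y) (rx P (tup C (cmp C (pr1 C X Z) (pr1 C (prd C X Z) Y)) (pr2 C (prd C X Z) Y)) \<phi>)
              (rx P (tup C (pr2 C (prd C X Z) Y) (cmp C (pr2 C X Z) (pr1 C (prd C X Z) Y))) \<psi>))
          (rx P (pr1 C (prd C X Z) Y) \<beta>)"
  shows "leq P (prd C X Z) (rcomp C P X Y Z \<phi> \<psi>) \<beta>"
  unfolding rcomp_unf
  by (rule ex_elim) (use assms in simp_all)

lemma rcopy_car[simp]: "rcopy C P X \<in> car P (prd C X (prd C X X))"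
  unfolding rcopy_def graph_def diag_def cross_def by simp

lemma A_ge:
  assumes ph: "\<phi> \<in> car P (prd C X Y)"
  shows "leq P (prd C X (prd C Y Y))
     (mt P (prd C X (prd C Y Y)) (rx P (tup C (tpr1 C X Y Y) (tpr2 C X Y Y)) \<phi>)
       (rx P (tup C (tpr2 C X Y Y) (tpr3 C X Y Y)) (eqp P Y)))
     (rcomp C P X Y (prd C Y Y) \<phi> (rcopy C P Y))"
proof -
  let ?W = "prd C X (prd C Y Y)"
  let ?s = "cmp C (pr1 C Y Y) (pr2 C X (prd C Y Y))"
  let ?t = "cmp C (pr2 C Y Y) (pr2 C X (prd C Y Y))"
  let ?s' = "cmp C ?s (pr1 C ?W Y)"
  have L: "leq P ?W (mt P ?W (tp P ?W) (rx P (tup C ?s ?t) (eqp P Y)))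
       (rx P (tup C (tup C ?s ?s) (tup C ?s ?t)) (eqp P (prd C Y Y)))"
    using Leib[of "rx P (tup C (tup C ?s' ?s') (tup C ?s' (pr2 C ?W Y))) (eqp P (prd C Y Y))" ?W Y ?s ?t]
    by simp
  show ?thesis
    apply (rule rcomp_intro[where s="?s"])
    using ph L
    apply (simp_all add: tpr_defs rcopy_def graph_def)
    by (intro mt_mono2) simp_all
qed


lemma mt_swap_le: "leq P X (mt P X b a) c \<Longrightarrow> a \<in> car P X \<Longrightarrow> b \<in> car P X \<Longrightarrow> c \<in> car P X \<Longrightarrow>
   leq P X (mt P X a b) c"
  by (rule leq_trans[of _ X "mt P X b a"]) (auto intro!: mt_glb mt_le1 mt_le2)

lemma rtensor_unf: "rtensor C P X Y U V \<phi> \<psi> =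
     mt P (prd C (prd C X U) (prd C Y V))
       (rx P (tup C (cmp C (pr1 C X U) (pr1 C (prd C X U) (prd C Y V))) (cmp C (pr1 C Y V) (pr2 C (prd C X U) (prd C Y V)))) \<phi>)
       (rx P (tup C (cmp C (pr2 C X U) (pr1 C (prd C X U) (prd C Y V))) (cmp C (pr2 C Y V) (pr2 C (prd C X U) (prd C Y V)))) \<psi>)"
  unfolding rtensor_def Let_def ..

lemma rtensor_car[simp]: "\<phi> \<in> car P (prd C X Y) \<Longrightarrow> \<psi> \<in> car P (prd C U V) \<Longrightarrow>
   rtensor C P X Y U V \<phi> \<psi> \<in> car P (prd C (prd C X U) (prd C Y V))"
  unfolding rtensor_unf by simp

lemma B_ge:
  assumes ph: "\<phi> \<in> car P (prd C X Y)"
  shows "leq P (prd C X (prd C Y Y))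
     (mt P (prd C X (prd C Y Y)) (rx P (tup C (tpr1 C X Y Y) (tpr2 C X Y Y)) \<phi>)
       (rx P (tup C (tpr1 C X Y Y) (tpr3 C X Y Y)) \<phi>))
     (rcomp C P X (prd C X X) (prd C Y Y) (rcopy C P X) (rtensor C P X Y X Y \<phi> \<phi>))"
  apply (rule rcomp_intro[where s="tup C (pr1 C X (prd C Y Y)) (pr1 C X (prd C Y Y))"])
  using ph
  apply (simp_all add: tpr_defs rcopy_def graph_def rtensor_unf)
  by (rule leq_refl) simp

lemma B_le:
  assumes ph: "\<phi> \<in> car P (prd C X Y)"
  shows "leq P (prd C X (prd C Y Y))
     (rcomp C P X (prd C X X) (prd C Y Y) (rcopy C P X) (rtensor C P X Y X Y \<phi> \<phi>))
     (mt P (prd C X (prd C Y Y)) (rx P (tup C (tpr1 C X Y Y) (tpr2 C X Y Y)) \<phi>)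
       (rx P (tup C (tpr1 C X Y Y) (tpr3 C X Y Y)) \<phi>))"
proof -
  let ?W = "prd C X (prd C Y Y)"
  let ?XX = "prd C X X"
  let ?V = "prd C ?W ?XX"
  let ?pX = "cmp C (pr1 C X (prd C Y Y)) (pr1 C ?W ?XX)"
  let ?u = "pr2 C ?W ?XX"
  let ?pZ = "cmp C (pr2 C X (prd C Y Y)) (pr1 C ?W ?XX)"
  let ?q = "pr1 C ?V ?XX"
  let ?r = "pr2 C ?V ?XX"
  let ?\<gamma> = "mt P (prd C ?V ?XX)
     (rx P (tup C (cmp C (pr1 C X X) ?r) (cmp C (pr1 C Y Y) (cmp C ?pZ ?q))) \<phi>)
     (rx P (tup C (cmp C (pr2 C X X) ?r) (cmp C (pr2 C Y Y) (cmp C ?pZ ?q))) \<phi>)"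
  have L: "leq P ?V (mt P ?V (rx P (tup C (idt C ?V) ?u) ?\<gamma>) (rx P (tup C (tup C ?pX ?pX) ?u) (eqp P ?XX)))
     (rx P (tup C (idt C ?V) (tup C ?pX ?pX)) ?\<gamma>)"
    by (rule Leib') (use ph in simp_all)
  show ?thesis
    apply (rule rcomp_elim)
    using ph L
    apply (simp_all add: tpr_defs rcopy_def graph_def rtensor_unf)
    by (erule mt_swap_le) simp_all
qed


lemma bang_cmp[simp]: "ccod C f = X \<Longrightarrow> cmp C (bang C X) f = bang C (cdom C f)"
  by (rule bang_uniq) auto
lemma pr2_one[simp]: "pr2 C X (one C) = bang C (prd C X (one C))"
  by (rule bang_uniq) auto

lemma rdisc_tp: "rdisc C P X = tp P (prd C X (one C))"
  unfolding rdisc_def graph_def cross_def by simp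

lemma rdisc_comp: "\<phi> \<in> car P (prd C X Y) \<Longrightarrow>
   rcomp C P X Y (one C) \<phi> (rdisc C P Y) = rx P (pr1 C X (one C)) (ex P X Y \<phi>)"
  unfolding rcomp_unf rdisc_tp by (simp add: ex_BC cross_def)

lemma entire_iff: "\<phi> \<in> car P (prd C X Y) \<Longrightarrow>
   leq P (prd C X (one C)) (rdisc C P X) (rcomp C P X Y (one C) \<phi> (rdisc C P Y))
   \<longleftrightarrow> entire C P X Y \<phi>"
proof -
  assume ph: "\<phi> \<in> car P (prd C X Y)"
  show ?thesis
    unfolding rdisc_comp[OF ph] entire_def
  proof
    assume "leq P (prd C X (one C)) (rdisc C P X) (rx P (pr1 C X (one C)) (ex P X Y \<phi>))"
    hence "leq P X (rx P (tup C (idt C X) (bang C X)) (rdisc C P X))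
       (rx P (tup C (idt C X) (bang C X)) (rx P (pr1 C X (one C)) (ex P X Y \<phi>)))"
      using ph by (intro rx_mono) (auto simp: rdisc_tp)
    thus "leq P X (tp P X) (ex P X Y \<phi>)" using ph by (simp add: rdisc_tp)
  next
    assume "leq P X (tp P X) (ex P X Y \<phi>)"
    hence "leq P (prd C X (one C)) (rx P (pr1 C X (one C)) (tp P X)) (rx P (pr1 C X (one C)) (ex P X Y \<phi>))"
      using ph by (intro rx_mono) auto
    thus "leq P (prd C X (one C)) (rdisc C P X) (rx P (pr1 C X (one C)) (ex P X Y \<phi>))"
      by (simp add: rdisc_tp)
  qed
qed

lemma functional_iff:
  assumes ph: "\<phi> \<in> car P (prd C X Y)"
  shows "leq P (prd C X (prd C Y Y))
        (rcomp C P X (prd C X X) (prd C Y Y) (rcopy C P X) (rtensor C P X Y X Y \<phi> \<phi>))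
        (rcomp C P X Y (prd C Y Y) \<phi> (rcopy C P Y)) \<longleftrightarrow> functional C P X Y \<phi>"
proof -
  let ?W = "prd C X (prd C Y Y)"
  let ?F = "mt P ?W (rx P (tup C (tpr1 C X Y Y) (tpr2 C X Y Y)) \<phi>)
       (rx P (tup C (tpr1 C X Y Y) (tpr3 C X Y Y)) \<phi>)"
  let ?D = "rx P (tup C (tpr2 C X Y Y) (tpr3 C X Y Y)) (eqp P Y)"
  let ?G = "mt P ?W (rx P (tup C (tpr1 C X Y Y) (tpr2 C X Y Y)) \<phi>) ?D"
  let ?L = "rcomp C P X (prd C X X) (prd C Y Y) (rcopy C P X) (rtensor C P X Y X Y \<phi> \<phi>)"
  let ?R = "rcomp C P X Y (prd C Y Y) \<phi> (rcopy C P Y)"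
  have cF: "?F \<in> car P ?W" and cD: "?D \<in> car P ?W" and cG: "?G \<in> car P ?W"
    and c1: "rx P (tup C (tpr1 C X Y Y) (tpr2 C X Y Y)) \<phi> \<in> car P ?W"
    and c2: "rx P (tup C (tpr1 C X Y Y) (tpr3 C X Y Y)) \<phi> \<in> car P ?W"
    using ph by (simp_all add: tpr_defs)
  have cL: "?L \<in> car P ?W" and cR: "?R \<in> car P ?W"
    using ph by (simp_all add: rcomp_unf)
  have fun_eq: "functional C P X Y \<phi> \<longleftrightarrow> leq P ?W ?F ?D"
    unfolding functional_def ..
  show ?thesis unfolding fun_eq
  proof
    assume "leq P ?W ?L ?R"
    thus "leq P ?W ?F ?D"
      using B_ge[OF ph] A_le[OF ph] cF cD cL cR by (meson leq_trans)
  next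
    assume h: "leq P ?W ?F ?D"
    have "leq P ?W ?F ?G" using h c1 c2 cD by (intro mt_glb mt_le1) auto
    thus "leq P ?W ?L ?R"
      using B_le[OF ph] A_ge[OF ph] cF cG cL cR by (meson leq_trans)
  qed
qed

lemma main: "\<phi> \<in> car P (prd C X Y) \<Longrightarrow>
   is_map C P X Y \<phi> \<longleftrightarrow> functional C P X Y \<phi> \<and> entire C P X Y \<phi>"
  unfolding is_map_def using functional_iff entire_iff by blast

end

theorem proposition29:
  fixes C :: "('o,'a) fpcat" and P :: "('o,'a,'p) doctrine"
    and X Y :: 'o and \<phi> :: 'p
  assumes "is_elem_exist_doctrine C P"
    and "\<phi> \<in> car P (prd C X Y)"
  shows "is_map C P X Y \<phi> \<longleftrightarrow> functional C P X Y \<phi> \<and> entire C P X Y \<phi>"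
proof -
  interpret ED C P by standard (rule assms(1))
  show ?thesis by (rule main[OF assms(2)])
qed

end
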